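(* Under the hypotheses $\frac{d\lambda}{dt}=\alpha_0\lambda$ ($\alpha_0\ne0$) and $\frac{d}{dt}m_j=\alpha_0jm_j+\alpha_1m_{j+1}+\alpha_2m_{j-1}$ for all $j\in\mathbb Z$, with all required inverses existing, the recurrence coefficients satisfy the noncommutative nonisospectral mixed relativistic Toda lattice: $$\frac{d}{dt}a_n=\alpha_0a_n+\alpha_1(-a_{n+1}a_n+a_na_{n-1}+b_na_n-a_nb_{n-1})+\alpha_2(b_n^{-1}a_n-a_nb_{n-1}^{-1}),$$ $$\frac{d}{dt}b_n=\alpha_0b_n+\alpha_1(b_na_n-a_{n+1}b_n)+\alpha_2(b_{n+1}^{-1}a_{n+1}-a_nb_{n-1}^{-1}).$$ The boundary conventions are $a_0=0$ and $P_{-1}=0$.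
   Context: $R$ is a skew field containing moments $m_i(t)$, $i\in\mathbb Z$, with an involution $*$ and a derivation $\frac{d}{dt}$. The pairing is $\langle\sum a_i\lambda^i,\sum b_j\lambda^j\rangle=\sum a_im_{i-j}b_j^*$. Let $\Lambda_{n-1}=(m_{i-j})_{i,j=0}^{n-1}$ (invertible) and $\theta_n=(m_n,\dots,m_1)$. The polynomials are $P_n=\lambda^n-\theta_n\Lambda_{n-1}^{-1}(1,\dots,\lambda^{n-1})^T$, the monic Laurent biorthogonal polynomials. Further, $$H_n=m_0-\theta_n\Lambda_{n-1}^{-1}(m_{-n},\dots,m_{-1})^T,\qquad \tau_n=m_{n+1}-\theta_n\Lambda_{n-1}^{-1}(m_1,\dots,m_n)^T,$$ $$a_n=-\tau_n\tau_{n-1}^{-1},\qquad b_n=a_nH_{n-1}H_n^{-1}.$$ The recurrence coefficients satisfy $\lambda(P_n+a_nP_{n-1})=P_{n+1}+b_nP_n$. The spectral parameter $\lambda=\lambda(t)$ is time-dependent. *)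

theory Defs
  imports Main
begin

text \<open>Abstract setting: a skew field (type class division_ring) carrying a derivation D
  (playing the role of d/dt). Square matrices of size n are
  functions nat => nat => 'a, only entries with indices < n matter.\<close>

definition derivation :: "('a::ring_1 \<Rightarrow> 'a) \<Rightarrow> bool" where
  "derivation D \<longleftrightarrow> (\<forall>x y. D (x + y) = D x + D y) \<and> (\<forall>x y. D (x * y) = D x * y + x * D y)"

definition mat_mult :: "nat \<Rightarrow> (nat \<Rightarrow> nat \<Rightarrow> 'a::ring_1) \<Rightarrow> (nat \<Rightarrow> nat \<Rightarrow> 'a) \<Rightarrow> nat \<Rightarrow> nat \<Rightarrow> 'a" where
  "mat_mult n A B = (\<lambda>i j. \<Sum>k<n. A i k * B k j)"

definition is_inverse_mat :: "nat \<Rightarrow> (nat \<Rightarrow> nat \<Rightarrow> 'a::ring_1) \<Rightarrow> (nat \<Rightarrow> nat \<Rightarrow> 'a) \<Rightarrow> bool" where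
  "is_inverse_mat n A B \<longleftrightarrow> (\<forall>i<n. \<forall>j<n.
      mat_mult n A B i j = (if i = j then 1 else 0) \<and> mat_mult n B A i j = (if i = j then 1 else 0))"

definition mat_invertible :: "nat \<Rightarrow> (nat \<Rightarrow> nat \<Rightarrow> 'a::ring_1) \<Rightarrow> bool" where
  "mat_invertible n A \<longleftrightarrow> (\<exists>B. is_inverse_mat n A B)"

definition mat_inverse :: "nat \<Rightarrow> (nat \<Rightarrow> nat \<Rightarrow> 'a::ring_1) \<Rightarrow> nat \<Rightarrow> nat \<Rightarrow> 'a" where
  "mat_inverse n A = (SOME B. is_inverse_mat n A B)"

text \<open>moment_matrix m n is Lambda_(n-1) = (m_(i-j))_(i,j=0..n-1), an n x n matrix.\<close>
definition moment_matrix :: "(int \<Rightarrow> 'a::ring_1) \<Rightarrow> nat \<Rightarrow> nat \<Rightarrow> nat \<Rightarrow> 'a" where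
  "moment_matrix m n = (\<lambda>i j. m (int i - int j))"

text \<open>theta_n Lambda_(n-1)^(-1) v^T, where theta_n = (m_n, ..., m_1), i.e. entry k is m_(n-k).\<close>
definition theta_quad :: "(int \<Rightarrow> 'a::ring_1) \<Rightarrow> nat \<Rightarrow> (nat \<Rightarrow> 'a) \<Rightarrow> 'a" where
  "theta_quad m n v = (\<Sum>i<n. \<Sum>j<n. m (int n - int i) * mat_inverse n (moment_matrix m n) i j * v j)"

definition Hn :: "(int \<Rightarrow> 'a::ring_1) \<Rightarrow> nat \<Rightarrow> 'a" where
  "Hn m n = m 0 - theta_quad m n (\<lambda>j. m (int j - int n))"

definition taun :: "(int \<Rightarrow> 'a::ring_1) \<Rightarrow> nat \<Rightarrow> 'a" where
  "taun m n = m (int n + 1) - theta_quad m n (\<lambda>j. m (int j + 1))"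

definition an :: "(int \<Rightarrow> 'a::division_ring) \<Rightarrow> nat \<Rightarrow> 'a" where
  "an m n = (if n = 0 then 0 else - (taun m n * inverse (taun m (n - 1))))"

text \<open>b_n = a_n H_(n-1) H_n^(-1) for n >= 1; b_0 = m_1 m_0^(-1) is forced by the recurrence
  lambda P_0 = P_1 + b_0 P_0 with P_(-1) = 0.\<close>
definition bn :: "(int \<Rightarrow> 'a::division_ring) \<Rightarrow> nat \<Rightarrow> 'a" where
  "bn m n = (if n = 0 then m 1 * inverse (m 0) else an m n * Hn m (n - 1) * inverse (Hn m n))"

end

theory Submission
  imports Defs
begin




lemma inv_mat_props: assumes "mat_invertible s A" shows "is_inverse_mat s A (mat_inverse s A)"
  using assms unfolding mat_invertible_def mat_inverse_def by (rule someI_ex)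

definition cc :: "(int \<Rightarrow> 'a::ring_1) \<Rightarrow> nat \<Rightarrow> nat \<Rightarrow> 'a" where
  "cc m j l = (\<Sum>r<j. m (int j - int r) * mat_inverse j (moment_matrix m j) r l)"

lemma theta_quad_cc: "theta_quad m j v = (\<Sum>l<j. cc m j l * v l)"
  unfolding theta_quad_def cc_def sum_distrib_right
  by (rule sum.swap)

lemma cc_solve:
  assumes inv: "mat_invertible j (moment_matrix m j)" and k: "k < j"
  shows "(\<Sum>l<j. cc m j l * m (int l - int k)) = m (int j - int k)"
proof -
  let ?B = "mat_inverse j (moment_matrix m j)"
  have BL: "(\<Sum>l<j. ?B r l * m (int l - int k)) = (if r = k then 1 else 0)" if "r < j" for r
  proof -
    have "mat_mult j ?B (moment_matrix m j) r k = (if r = k then 1 else 0)"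
      using inv_mat_props[OF inv] that k unfolding is_inverse_mat_def by blast
    then show ?thesis unfolding mat_mult_def moment_matrix_def by simp
  qed
  have "(\<Sum>l<j. cc m j l * m (int l - int k))
      = (\<Sum>l<j. \<Sum>r<j. m (int j - int r) * ?B r l * m (int l - int k))"
    unfolding cc_def by (simp add: sum_distrib_right)
  also have "\<dots> = (\<Sum>r<j. m (int j - int r) * (\<Sum>l<j. ?B r l * m (int l - int k)))"
    by (subst sum.swap) (simp add: sum_distrib_left mult.assoc)
  also have "\<dots> = (\<Sum>r<j. m (int j - int r) * (if r = k then 1 else 0))"
    by (rule sum.cong) (simp_all add: BL)
  also have "\<dots> = m (int j - int k)" using k by (simp add: if_distrib cong: if_cong)
  finally show ?thesis .
qed

lemma uniq:
  assumes inv: "mat_invertible s (moment_matrix m s)"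
    and h: "\<forall>k<s. (\<Sum>l<s. f l * m (int l - int k)) = 0" and l': "l' < s"
  shows "f l' = 0"
proof -
  let ?B = "mat_inverse s (moment_matrix m s)"
  have LB: "(\<Sum>k<s. m (int l - int k) * ?B k l') = (if l = l' then 1 else 0)" if "l < s" for l
  proof -
    have "mat_mult s (moment_matrix m s) ?B l l' = (if l = l' then 1 else 0)"
      using inv_mat_props[OF inv] that l' unfolding is_inverse_mat_def by blast
    then show ?thesis unfolding mat_mult_def moment_matrix_def by simp
  qed
  have "f l' = (\<Sum>l<s. f l * (if l = l' then 1 else 0))" using l' by (simp add: if_distrib cong: if_cong)
  also have "\<dots> = (\<Sum>l<s. f l * (\<Sum>k<s. m (int l - int k) * ?B k l'))"
    by (rule sum.cong) (simp_all add: LB)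
  also have "\<dots> = (\<Sum>k<s. (\<Sum>l<s. f l * m (int l - int k)) * ?B k l')"
    unfolding sum_distrib_left sum_distrib_right by (subst sum.swap) (simp add: mult.assoc)
  also have "\<dots> = 0" using h by simp
  finally show ?thesis .
qed



definition pc :: "(int \<Rightarrow> 'a::ring_1) \<Rightarrow> nat \<Rightarrow> int \<Rightarrow> 'a" where
  "pc m j i = (if i = int j then 1 else if 0 \<le> i \<and> i < int j then - cc m j (nat i) else 0)"

definition Lw :: "(int \<Rightarrow> 'a::ring_1) \<Rightarrow> int \<Rightarrow> int \<Rightarrow> (int \<Rightarrow> 'a) \<Rightarrow> 'a" where
  "Lw m w k f = (\<Sum>i\<in>{-1..w}. f i * m (i - k))"

lemma Lw_support:
  assumes "\<forall>i. (i < 0 \<or> i \<ge> int s) \<longrightarrow> f i = 0" "int s \<le> w + 1"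
  shows "Lw m w k f = (\<Sum>l<s. f (int l) * m (int l - k))"
proof -
  have "Lw m w k f = (\<Sum>i\<in>{0..<int s}. f i * m (i - k))"
    unfolding Lw_def by (rule sum.mono_neutral_right) (use assms in auto)
  also have "\<dots> = (\<Sum>l<s. f (int l) * m (int l - k))"
  proof -
    have "{0..<int s} = int ` {..<s}" using image_int_atLeastLessThan[of 0 s]
      by (simp add: atLeast0LessThan)
    then show ?thesis by (simp add: sum.reindex)
  qed
  finally show ?thesis .
qed

lemma Lw_shr:
  assumes "f (-2) = 0" "f w = 0"
  shows "Lw m w k (\<lambda>i. f (i - 1)) = Lw m w (k - 1) f"
proof -
  have "Lw m w k (\<lambda>i. f (i - 1)) = (\<Sum>i\<in>{-2..w-1}. f i * m (i - (k - 1)))"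
    unfolding Lw_def
    by (rule sum.reindex_bij_witness[of _ "\<lambda>b. b + 1" "\<lambda>a. a - 1"]) (auto simp: algebra_simps)
  also have "\<dots> = (\<Sum>i\<in>{-2..w}. f i * m (i - (k - 1)))"
  proof (rule sum.mono_neutral_left)
    show "\<forall>i\<in>{-2..w} - {-2..w-1}. f i * m (i - (k - 1)) = 0"
    proof
      fix i assume "i \<in> {-2..w} - {-2..w-1}"
      then have "i = w" by auto
      then show "f i * m (i - (k - 1)) = 0" using assms by simp
    qed
  qed auto
  also have "\<dots> = Lw m w (k - 1) f"
    unfolding Lw_def
  proof (rule sum.mono_neutral_right)
    show "\<forall>i\<in>{-2..w} - {-1..w}. f i * m (i - (k - 1)) = 0"
    proof
      fix i assume "i \<in> {-2..w} - {-1..w}"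
      then have "i = -2" by auto
      then show "f i * m (i - (k - 1)) = 0" using assms by simp
    qed
  qed auto
  finally show ?thesis .
qed

lemma Lw_shl:
  assumes "f (-1) = 0" "f (w + 1) = 0"
  shows "Lw m w k (\<lambda>i. f (i + 1)) = Lw m w (k + 1) f"
proof -
  have "Lw m w k (\<lambda>i. f (i + 1)) = (\<Sum>i\<in>{0..w+1}. f i * m (i - (k + 1)))"
    unfolding Lw_def
    by (rule sum.reindex_bij_witness[of _ "\<lambda>b. b - 1" "\<lambda>a. a + 1"]) (auto simp: algebra_simps)
  also have "\<dots> = (\<Sum>i\<in>{-1..w+1}. f i * m (i - (k + 1)))"
  proof (rule sum.mono_neutral_left)
    show "\<forall>i\<in>{-1..w+1} - {0..w+1}. f i * m (i - (k + 1)) = 0"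
    proof
      fix i assume "i \<in> {-1..w+1} - {0..w+1}"
      then have "i = -1" by auto
      then show "f i * m (i - (k + 1)) = 0" using assms by simp
    qed
  qed auto
  also have "\<dots> = Lw m w (k + 1) f"
    unfolding Lw_def
  proof (rule sum.mono_neutral_right)
    show "\<forall>i\<in>{-1..w+1} - {-1..w}. f i * m (i - (k + 1)) = 0"
    proof
      fix i assume "i \<in> {-1..w+1} - {-1..w}"
      then have "i = w + 1" by auto
      then show "f i * m (i - (k + 1)) = 0" using assms by simp
    qed
  qed auto
  finally show ?thesis .
qed

lemma Lw_add: "Lw m w k (\<lambda>i. f i + g i) = Lw m w k f + Lw m w k g"
  unfolding Lw_def by (simp add: distrib_right sum.distrib)

lemma Lw_diff: "Lw m w k (\<lambda>i. f i - g i) = Lw m w k f - Lw m w k g"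
  unfolding Lw_def by (simp add: left_diff_distrib sum_subtractf)

lemma Lw_cmult: "Lw m w k (\<lambda>i. c * f i) = c * Lw m w k f"
  unfolding Lw_def by (simp add: sum_distrib_left mult.assoc)

lemma Lw_zero: "Lw m w k (\<lambda>i. 0) = 0"
  unfolding Lw_def by simp

lemma pc_out: "i < 0 \<or> i > int j \<Longrightarrow> pc m j i = 0"
  unfolding pc_def by auto

lemma pc_top: "pc m j (int j) = 1"
  unfolding pc_def by auto

lemma L_pc:
  assumes "int j \<le> w"
  shows "Lw m w k (pc m j) = m (int j - k) - (\<Sum>l<j. cc m j l * m (int l - k))"
proof -
  have "Lw m w k (pc m j) = (\<Sum>l<Suc j. pc m j (int l) * m (int l - k))"
    by (rule Lw_support) (use assms in \<open>auto simp: pc_out\<close>)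
  also have "\<dots> = (\<Sum>l<j. pc m j (int l) * m (int l - k)) + m (int j - k)"
    by (simp add: pc_top)
  also have "(\<Sum>l<j. pc m j (int l) * m (int l - k)) = (\<Sum>l<j. - (cc m j l * m (int l - k)))"
    by (rule sum.cong) (auto simp: pc_def)
  finally show ?thesis by (simp add: sum_negf)
qed

lemma L_pc_zero:
  assumes "int j \<le> w" "mat_invertible j (moment_matrix m j)" "k < j"
  shows "Lw m w (int k) (pc m j) = 0"
  by (simp add: L_pc[OF assms(1)] cc_solve[OF assms(2,3)])

lemma L_pc_H:
  assumes "int j \<le> w"
  shows "Lw m w (int j) (pc m j) = Hn m j"
  unfolding Hn_def theta_quad_cc by (simp add: L_pc[OF assms(1)])

lemma L_pc_tau:
  assumes "int j \<le> w"
  shows "Lw m w (-1) (pc m j) = taun m j"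
  unfolding taun_def theta_quad_cc by (simp add: L_pc[OF assms(1)])


lemma an_zero[simp]: "an m 0 = 0" unfolding an_def by simp

lemma pc_top': "pc m (Suc j) (int j + 1) = 1"
  using pc_top[of m "Suc j"] by (simp add: add.commute)

lemma H0: "Hn m 0 = m 0" unfolding Hn_def theta_quad_def by simp
lemma tau0: "taun m 0 = m 1" unfolding taun_def theta_quad_def by simp

lemma rec_facts:
  fixes m :: "int \<Rightarrow> 'a::division_ring"
  assumes inv: "\<forall>k\<le>j+1. mat_invertible k (moment_matrix m k)"
    and tau: "\<forall>k\<le>j+1. taun m k \<noteq> 0"
    and H: "\<forall>k\<le>j+1. Hn m k \<noteq> 0"
  shows "pc m (Suc j) 0 = - (bn m j * pc m j 0)"
    and "pc m j (int j - 1) + an m j = pc m (Suc j) (int j) + bn m j"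
proof -
  define w where "w = int j + 1"
  define a where "a = an m j"
  define b where "b = bn m j"
  define X where "X = (\<lambda>i. pc m j (i - 1) + a * pc m (j - 1) (i - 1) - pc m (Suc j) i - b * pc m j i)"
  have a_top: "a * pc m (j - 1) (int j) = 0"
  proof (cases j)
    case 0 then show ?thesis by (simp add: a_def)
  next
    case (Suc j') then show ?thesis by (simp add: pc_out)
  qed
  have Xout: "\<forall>i. (i < 0 \<or> i \<ge> int (Suc j)) \<longrightarrow> X i = 0"
  proof (intro allI impI)
    fix i :: int assume "i < 0 \<or> i \<ge> int (Suc j)"
    then consider "i < 0" | "i = int j + 1" | "i > int j + 1" by linarith
    then show "X i = 0"
    proof cases
      case 1 then show ?thesis by (simp add: X_def pc_out)
    next
      case 2
      have "X i = a * pc m (j - 1) (int j)" using 2 by (simp add: X_def pc_out pc_top pc_top')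
      then show ?thesis using a_top by simp
    next
      case 3 then show ?thesis by (simp add: X_def pc_out)
    qed
  qed
  have invj: "mat_invertible j (moment_matrix m j)" and invS: "mat_invertible (Suc j) (moment_matrix m (Suc j))"
    and invp: "mat_invertible (j - 1) (moment_matrix m (j - 1))"
    using inv by auto
  have LX: "Lw m w k X = Lw m w (k - 1) (pc m j) + a * Lw m w (k - 1) (pc m (j - 1))
      - Lw m w k (pc m (Suc j)) - b * Lw m w k (pc m j)" for k
  proof -
    have s1: "Lw m w k (\<lambda>i. pc m j (i - 1)) = Lw m w (k - 1) (pc m j)"
      by (rule Lw_shr) (auto simp: w_def pc_out)
    have s2: "Lw m w k (\<lambda>i. pc m (j - 1) (i - 1)) = Lw m w (k - 1) (pc m (j - 1))"
      by (rule Lw_shr) (auto simp: w_def pc_out)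
    show ?thesis unfolding X_def
      by (simp only: Lw_diff Lw_add Lw_cmult s1 s2)
  qed
  have Lzero: "\<forall>k<Suc j. (\<Sum>l<Suc j. X (int l) * m (int l - int k)) = 0"
  proof (intro allI impI)
    fix k assume k: "k < Suc j"
    have "(\<Sum>l<Suc j. X (int l) * m (int l - int k)) = Lw m w (int k) X"
      by (rule Lw_support[symmetric]) (use Xout in \<open>auto simp: w_def\<close>)
    also have "\<dots> = 0"
    proof -
      have LS: "Lw m w (int k) (pc m (Suc j)) = 0"
        by (rule L_pc_zero) (use invS k in \<open>auto simp: w_def\<close>)
      consider "j = 0" | "j > 0" "k = 0" | "0 < k" "k < j" | "0 < k" "k = j" using k by linarith
      then show ?thesis
      proof cases
        case 1
        then have "k = 0" using k by simp
        have "m 0 \<noteq> 0" using H H0[of m] by auto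
        then have "b * m 0 = m 1" using 1 by (simp add: b_def bn_def mult.assoc)
        have t0: "Lw m w (-1) (pc m j) = m 1" using 1 L_pc_tau[of j w m] by (simp add: w_def tau0)
        have h0: "Lw m w 0 (pc m j) = m 0" using 1 L_pc_H[of j w m] by (simp add: w_def H0)
        have "a = 0" using 1 by (simp add: a_def)
        then show ?thesis using 1 \<open>k = 0\<close> LS LX[of 0] t0 h0 \<open>b * m 0 = m 1\<close> by simp
      next
        case 2
        have t: "taun m (j - 1) \<noteq> 0" using tau by auto
        have "a * taun m (j - 1) = - taun m j"
          using 2 t by (simp add: a_def an_def mult.assoc)
        moreover have "Lw m w 0 (pc m j) = 0" using L_pc_zero[of j w m 0] invj 2 by (simp add: w_def)
        moreover have "Lw m w (-1) (pc m j) = taun m j" by (rule L_pc_tau) (simp add: w_def)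
        moreover have "Lw m w (-1) (pc m (j - 1)) = taun m (j - 1)" by (rule L_pc_tau) (simp add: w_def)
        ultimately show ?thesis using 2 LS LX[of 0] by simp
      next
        case 3
        have e: "int k - 1 = int (k - 1)" using 3 by simp
        have z1: "Lw m w (int (k - 1)) (pc m j) = 0" by (rule L_pc_zero) (use invj 3 in \<open>auto simp: w_def\<close>)
        have z2: "Lw m w (int (k - 1)) (pc m (j - 1)) = 0" by (rule L_pc_zero) (use invp 3 in \<open>auto simp: w_def\<close>)
        have z3: "Lw m w (int k) (pc m j) = 0" by (rule L_pc_zero) (use invj 3 in \<open>auto simp: w_def\<close>)
        show ?thesis unfolding LX e z1 z2 z3 LS by simp
      next
      case 4
      then have "k = j" by simp
      have e: "int j - 1 = int (j - 1)" using 4 by simp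
      have z1: "Lw m w (int (j - 1)) (pc m j) = 0" by (rule L_pc_zero) (use invj 4 in \<open>auto simp: w_def\<close>)
      have h1: "Lw m w (int (j - 1)) (pc m (j - 1)) = Hn m (j - 1)" by (rule L_pc_H) (auto simp: w_def)
      have h2: "Lw m w (int j) (pc m j) = Hn m j" by (rule L_pc_H) (auto simp: w_def)
      have "b * Hn m j = a * Hn m (j - 1)"
        using H 4 by (simp add: b_def bn_def a_def mult.assoc)
      then show ?thesis unfolding LX \<open>k = j\<close> e z1 h1 h2 LS[unfolded \<open>k = j\<close>] by simp
      qed
    qed
    finally show "(\<Sum>l<Suc j. X (int l) * m (int l - int k)) = 0" .
  qed
  have X0: "X (int l) = 0" if "l < Suc j" for l
    using uniq[OF invS Lzero that] .
  from X0[of 0] show "pc m (Suc j) 0 = - (bn m j * pc m j 0)"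
  proof -
    have "- pc m (Suc j) 0 = bn m j * pc m j 0" using X0[of 0] by (simp add: X_def pc_out b_def)
    then show ?thesis by (metis minus_minus)
  qed
  have aa: "a * pc m (j - 1) (int j - 1) = a"
  proof (cases j)
    case 0 then show ?thesis by (simp add: a_def)
  next
    case (Suc j') then show ?thesis by (simp add: pc_top)
  qed
  have xx: "pc m j (int j - 1) + a * pc m (j - 1) (int j - 1) - pc m (Suc j) (int j) - b = 0"
    using X0[of j] by (simp add: X_def pc_top)
  from xx have "pc m j (int j - 1) + a - pc m (Suc j) (int j) - b = 0" unfolding aa .
  then show "pc m j (int j - 1) + an m j = pc m (Suc j) (int j) + bn m j"
    unfolding a_def b_def by (simp add: algebra_simps)
qed


lemma bn_nz:
  fixes m :: "int \<Rightarrow> 'a::division_ring"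
  assumes tau: "\<forall>k\<le>j+1. taun m k \<noteq> 0" and H: "\<forall>k\<le>j+1. Hn m k \<noteq> 0"
  shows "bn m j \<noteq> 0"
proof (cases j)
  case 0
  have "m 0 \<noteq> 0" "m 1 \<noteq> 0" using H tau H0[of m] tau0[of m] by auto
  then show ?thesis using 0 by (simp add: bn_def)
next
  case (Suc j')
  have "taun m j \<noteq> 0" "taun m (j - 1) \<noteq> 0" "Hn m j \<noteq> 0" "Hn m (j - 1) \<noteq> 0" using tau H by auto
  then show ?thesis using Suc by (simp add: bn_def an_def)
qed

locale tl =
  fixes D :: "'a::division_ring \<Rightarrow> 'a" and m :: "int \<Rightarrow> 'a" and \<alpha>0 \<alpha>1 \<alpha>2 :: 'a
  assumes der: "derivation D"
    and cen0: "\<And>x. \<alpha>0 * x = x * \<alpha>0"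
    and cen1: "\<And>x. \<alpha>1 * x = x * \<alpha>1"
    and cen2: "\<And>x. \<alpha>2 * x = x * \<alpha>2"
    and mom: "\<And>j. D (m j) = \<alpha>0 * of_int j * m j + \<alpha>1 * m (j + 1) + \<alpha>2 * m (j - 1)"
begin

lemma D_add: "D (x + y) = D x + D y" using der unfolding derivation_def by blast
lemma D_mult: "D (x * y) = D x * y + x * D y" using der unfolding derivation_def by blast
lemma D_0: "D 0 = 0" using D_add[of 0 0] by simp
lemma D_1: "D 1 = 0" using D_mult[of 1 1] by simp
lemma D_neg: "D (- x) = - D x"
  using D_add[of x "- x"] D_0 by (simp add: eq_neg_iff_add_eq_0 add.commute)
lemma D_diff: "D (x - y) = D x - D y"
  using D_add[of x "- y"] D_neg[of y] by simp
lemma D_sum: "D (sum f A) = (\<Sum>i\<in>A. D (f i))"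
  by (induction A rule: infinite_finite_induct) (simp_all add: D_0 D_add)

lemma cL0: "x * (\<alpha>0 * y) = \<alpha>0 * (x * y)" by (metis cen0 mult.assoc)
lemma cL1: "x * (\<alpha>1 * y) = \<alpha>1 * (x * y)" by (metis cen1 mult.assoc)
lemma cL2: "x * (\<alpha>2 * y) = \<alpha>2 * (x * y)" by (metis cen2 mult.assoc)

lemma D_Lw:
  "D (Lw m w k f) = Lw m w k (\<lambda>i. D (f i)) + \<alpha>0 * (Lw m w k (\<lambda>i. of_int i * f i) - of_int k * Lw m w k f)
     + \<alpha>1 * Lw m w (k - 1) f + \<alpha>2 * Lw m w (k + 1) f"
proof -
  have trm: "D (f i * m (i - k)) = D (f i) * m (i - k) + (\<alpha>0 * (of_int i * f i * m (i - k)) - \<alpha>0 * (of_int k * (f i * m (i - k))))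
      + \<alpha>1 * (f i * m (i - (k - 1))) + \<alpha>2 * (f i * m (i - (k + 1)))" for i
  proof -
    have e1: "i - k + 1 = i - (k - 1)" "i - k - 1 = i - (k + 1)" by simp_all
    have e2: "f i * (\<alpha>0 * of_int (i - k) * m (i - k)) = \<alpha>0 * (of_int i * f i * m (i - k)) - \<alpha>0 * (of_int k * (f i * m (i - k)))"
    proof -
      have "f i * (\<alpha>0 * of_int (i - k) * m (i - k)) = \<alpha>0 * ((f i * of_int (i - k)) * m (i - k))"
        by (simp add: mult.assoc cL0)
      also have "f i * of_int (i - k) = of_int (i - k) * f i" by (rule mult_of_int_commute[symmetric])
      finally show ?thesis by (simp only: of_int_diff left_diff_distrib right_diff_distrib mult.assoc)
    qed
    show ?thesis unfolding D_mult mom e1 distrib_left e2 cL1 cL2 by (simp add: algebra_simps)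
  qed
  show ?thesis
    unfolding Lw_def D_sum trm
    by (simp add: sum.distrib sum_subtractf sum_distrib_left mult.assoc right_diff_distrib)
qed

end


context tl begin

lemma F_facts:
  assumes inv: "\<forall>k\<le>j+1. mat_invertible k (moment_matrix m k)"
    and tau: "\<forall>k\<le>j+1. taun m k \<noteq> 0"
    and H: "\<forall>k\<le>j+1. Hn m k \<noteq> 0"
  shows "0 = D (taun m j) - \<alpha>0 * taun m j - \<alpha>1 * taun m (Suc j)
            - (\<alpha>0 * of_nat j + \<alpha>1 * (bn m j - an m j) + \<alpha>2 * inverse (bn m j)) * taun m j"
    and "0 = D (Hn m j) + \<alpha>0 * (of_nat j * Hn m j) + \<alpha>2 * (inverse (bn m j) * Hn m (Suc j))
            - (\<alpha>0 * of_nat j + \<alpha>1 * (bn m j - an m j) + \<alpha>2 * inverse (bn m j)) * Hn m j"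
proof -
  define w where "w = int j + 1"
  define P where "P = pc m j"
  define Q where "Q = pc m (Suc j)"
  define a where "a = an m j"
  define b where "b = bn m j"
  define y where "y = \<alpha>0 * of_nat j + \<alpha>1 * (b - a) + \<alpha>2 * inverse b"
  have bnz: "b \<noteq> 0" unfolding b_def by (rule bn_nz) (use tau H in auto)
  have r1: "Q 0 = - (b * P 0)" unfolding Q_def P_def b_def by (rule rec_facts(1)[OF inv tau H])
  have r2: "P (int j - 1) + a = Q (int j) + b" unfolding Q_def P_def b_def a_def by (rule rec_facts(2)[OF inv tau H])
  have invj: "mat_invertible j (moment_matrix m j)" and invS: "mat_invertible (Suc j) (moment_matrix m (Suc j))"
    using inv by auto
  define Z where "Z = (\<lambda>i. D (P i) + \<alpha>0 * (of_int i * P i) - \<alpha>1 * Q i + \<alpha>1 * P (i - 1)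
      + \<alpha>2 * (inverse b * Q (i + 1)) + \<alpha>2 * P (i + 1) - y * P i)"
  have LZ: "Lw m w k Z = D (Lw m w k P) + \<alpha>0 * (of_int k * Lw m w k P) - \<alpha>1 * Lw m w k Q
      + \<alpha>2 * (inverse b * Lw m w (k + 1) Q) - y * Lw m w k P" for k
  proof -
    have s1: "Lw m w k (\<lambda>i. P (i - 1)) = Lw m w (k - 1) P"
      by (rule Lw_shr) (auto simp: w_def P_def pc_out)
    have s2: "Lw m w k (\<lambda>i. Q (i + 1)) = Lw m w (k + 1) Q"
      by (rule Lw_shl) (auto simp: w_def Q_def pc_out)
    have s3: "Lw m w k (\<lambda>i. P (i + 1)) = Lw m w (k + 1) P"
      by (rule Lw_shl) (auto simp: w_def P_def pc_out)
    have raw: "Lw m w k Z = Lw m w k (\<lambda>i. D (P i)) + \<alpha>0 * Lw m w k (\<lambda>i. of_int i * P i) - \<alpha>1 * Lw m w k Q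
      + \<alpha>1 * Lw m w (k - 1) P + \<alpha>2 * (inverse b * Lw m w (k + 1) Q) + \<alpha>2 * Lw m w (k + 1) P - y * Lw m w k P"
      unfolding Z_def by (simp only: Lw_add Lw_diff Lw_cmult s1 s2 s3)
    show ?thesis unfolding raw D_Lw[of w k P] by (simp add: algebra_simps)
  qed
  have Zout: "Z i = 0" if io: "i < 0 \<or> i \<ge> int j" for i
  proof -
    consider "i < -1" | "i = -1" | "i = int j" | "i = int j + 1" | "i > int j + 1" using io by arith
    then show ?thesis
    proof cases
      case 1 then show ?thesis by (simp add: Z_def P_def Q_def pc_out D_0)
    next
      case 2
      have "inverse b * Q 0 + P 0 = 0" using bnz by (simp add: r1 mult.assoc[symmetric])
      then have "\<alpha>2 * (inverse b * Q 0) + \<alpha>2 * P 0 = 0" by (metis distrib_left mult_zero_right)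
      then show ?thesis using 2 by (simp add: Z_def P_def Q_def pc_out D_0)
    next
      case 3
      have Pt: "P (int j) = 1" "P (int j + 1) = 0" "Q (int j + 1) = 1"
        by (simp_all add: P_def Q_def pc_top pc_top' pc_out)
      have "Z i = \<alpha>0 * of_nat j - \<alpha>1 * Q (int j) + \<alpha>1 * P (int j - 1) + \<alpha>2 * inverse b - y"
        using 3 by (simp add: Z_def Pt D_1)
      also have "\<dots> = \<alpha>1 * (P (int j - 1) + a - Q (int j) - b)"
        by (simp add: y_def algebra_simps)
      also have "\<dots> = 0" using r2 by (simp add: algebra_simps)
      finally show ?thesis .
    next
      case 4
      have Pt: "P (int j) = 1" "P (int j + 1) = 0" "Q (int j + 1) = 1" "P (int j + 2) = 0" "Q (int j + 2) = 0"
        by (simp_all add: P_def Q_def pc_top pc_top' pc_out)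
      show ?thesis using 4 by (simp add: Z_def Pt D_0 add.assoc)
    next
      case 5 then show ?thesis by (simp add: Z_def P_def Q_def pc_out D_0)
    qed
  qed
  have Lzero: "\<forall>k<j. (\<Sum>l<j. Z (int l) * m (int l - int k)) = 0"
  proof (intro allI impI)
    fix k assume k: "k < j"
    have "(\<Sum>l<j. Z (int l) * m (int l - int k)) = Lw m w (int k) Z"
      by (rule Lw_support[symmetric]) (use Zout in \<open>auto simp: w_def\<close>)
    also have "\<dots> = 0"
    proof -
      have z1: "Lw m w (int k) P = 0" unfolding P_def by (rule L_pc_zero) (use invj k in \<open>auto simp: w_def\<close>)
      have z2: "Lw m w (int k) Q = 0" unfolding Q_def by (rule L_pc_zero) (use invS k in \<open>auto simp: w_def\<close>)
      have z3: "Lw m w (int (Suc k)) Q = 0" unfolding Q_def by (rule L_pc_zero) (use invS k in \<open>auto simp: w_def\<close>)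
      have e: "int k + 1 = int (Suc k)" by simp
      show ?thesis unfolding LZ e z1 z2 z3 by (simp add: D_0)
    qed
    finally show "(\<Sum>l<j. Z (int l) * m (int l - int k)) = 0" .
  qed
  have Z0: "Z i = 0" for i
  proof (cases "i < 0 \<or> i \<ge> int j")
    case True then show ?thesis by (rule Zout)
  next
    case False
    then obtain l where l: "i = int l" "l < j" by (metis nat_0_le nat_less_iff not_le)
    show ?thesis unfolding l(1) by (rule uniq[OF invj Lzero l(2)])
  qed
  have LZ0: "Lw m w k Z = 0" for k unfolding Lw_def Z0 by simp
  have tj: "Lw m w (-1) P = taun m j" unfolding P_def by (rule L_pc_tau) (simp add: w_def)
  have tS: "Lw m w (-1) Q = taun m (Suc j)" unfolding Q_def by (rule L_pc_tau) (simp add: w_def)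
  have q0: "Lw m w 0 Q = 0" using L_pc_zero[of "Suc j" w m 0] invS by (simp add: w_def Q_def)
  from LZ0[of "-1"] show "0 = D (taun m j) - \<alpha>0 * taun m j - \<alpha>1 * taun m (Suc j)
            - (\<alpha>0 * of_nat j + \<alpha>1 * (bn m j - an m j) + \<alpha>2 * inverse (bn m j)) * taun m j"
    unfolding LZ tj tS by (simp add: q0 y_def a_def b_def)
  have hj: "Lw m w (int j) P = Hn m j" unfolding P_def by (rule L_pc_H) (simp add: w_def)
  have hS: "Lw m w (int j + 1) Q = Hn m (Suc j)" unfolding Q_def using L_pc_H[of "Suc j" w m] by (simp add: w_def add.commute)
  have qj: "Lw m w (int j) Q = 0" unfolding Q_def by (rule L_pc_zero) (use invS in \<open>auto simp: w_def\<close>)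
  from LZ0[of "int j"] show "0 = D (Hn m j) + \<alpha>0 * (of_nat j * Hn m j) + \<alpha>2 * (inverse (bn m j) * Hn m (Suc j))
            - (\<alpha>0 * of_nat j + \<alpha>1 * (bn m j - an m j) + \<alpha>2 * inverse (bn m j)) * Hn m j"
    unfolding LZ hj hS qj by (simp add: y_def a_def b_def)
qed

end


context tl begin

lemma cR0: "x * \<alpha>0 = \<alpha>0 * x" by (rule cen0[symmetric])
lemma cR1: "x * \<alpha>1 = \<alpha>1 * x" by (rule cen1[symmetric])
lemma cR2: "x * \<alpha>2 = \<alpha>2 * x" by (rule cen2[symmetric])
lemma natL: "x * (of_nat p * y) = of_nat p * (x * y)" by (metis mult.assoc mult_of_nat_commute)
lemma natR: "x * of_nat p = of_nat p * x" by (rule mult_of_nat_commute[symmetric])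

lemma main:
  assumes inv: "\<forall>k\<le>n+1. mat_invertible k (moment_matrix m k)"
    and tau: "\<forall>k\<le>n+1. taun m k \<noteq> 0"
    and H: "\<forall>k\<le>n+1. Hn m k \<noteq> 0"
  shows "D (an m n) = \<alpha>0 * an m n
           + \<alpha>1 * (- (an m (n + 1) * an m n) + an m n * an m (n - 1) + bn m n * an m n - an m n * bn m (n - 1))
           + \<alpha>2 * (inverse (bn m n) * an m n - an m n * inverse (bn m (n - 1)))"
proof (cases n)
  case 0
  then show ?thesis by (simp add: D_0)
next
  case (Suc p)
  define y where "y j = \<alpha>0 * of_nat j + \<alpha>1 * (bn m j - an m j) + \<alpha>2 * inverse (bn m j)" for j
  have hyp: "\<forall>k\<le>j+1. mat_invertible k (moment_matrix m k)" "\<forall>k\<le>j+1. taun m k \<noteq> 0" "\<forall>k\<le>j+1. Hn m k \<noteq> 0"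
    if "j \<le> n" for j using inv tau H that by auto
  have Ft: "D (taun m j) = \<alpha>0 * taun m j + \<alpha>1 * taun m (Suc j) + y j * taun m j" if "j \<le> n" for j
    using F_facts(1)[OF hyp[OF that]] unfolding y_def by (simp add: algebra_simps eq_diff_eq)
  have t0: "taun m p \<noteq> 0" and t1: "taun m n \<noteq> 0" using tau Suc by auto
  have at: "an m n * taun m p = - taun m n" using t0 Suc by (simp add: an_def mult.assoc)
  have at': "an m (Suc n) * taun m n = - taun m (Suc n)" using t1 by (simp add: an_def mult.assoc)
  have e1: "taun m n = - (an m n * taun m p)" using at by simp
  have e2: "taun m (Suc n) = an m (Suc n) * (an m n * taun m p)" using at' e1 by simp
  have Dat: "D (an m n) * taun m p = - D (taun m n) - an m n * D (taun m p)"
    using arg_cong[OF at, of D] unfolding D_mult D_neg by (simp add: eq_diff_eq)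
  have "D (an m n) * taun m p = (\<alpha>0 * an m n
           + \<alpha>1 * (- (an m (n + 1) * an m n) + an m n * an m (n - 1) + bn m n * an m n - an m n * bn m (n - 1))
           + \<alpha>2 * (inverse (bn m n) * an m n - an m n * inverse (bn m (n - 1)))) * taun m p"
  proof -
    have Ftn: "D (taun m n) = \<alpha>0 * taun m n + \<alpha>1 * taun m (Suc n) + y n * taun m n" by (rule Ft) simp
    have Ftp: "D (taun m p) = \<alpha>0 * taun m p + \<alpha>1 * taun m (Suc p) + y p * taun m p" by (rule Ft) (simp add: Suc)
    have np: "n - 1 = p" "Suc p = n" using Suc by simp_all
    define \<zeta> where "\<zeta> = \<alpha>0 * of_nat p"
    have cLz: "x * (\<zeta> * z) = \<zeta> * (x * z)" for x z unfolding \<zeta>_def by (metis cL0 natL mult.assoc)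
    have cRz: "x * \<zeta> = \<zeta> * x" for x unfolding \<zeta>_def by (metis cR0 natR mult.assoc)
    have yn: "y n = \<zeta> + \<alpha>0 + \<alpha>1 * (bn m n - an m n) + \<alpha>2 * inverse (bn m n)"
      unfolding y_def \<zeta>_def using Suc by (simp add: algebra_simps)
    have yp: "y p = \<zeta> + \<alpha>1 * (bn m p - an m p) + \<alpha>2 * inverse (bn m p)"
      unfolding y_def \<zeta>_def by simp
    show ?thesis
      unfolding Dat Ftn Ftp np Suc_eq_plus1[symmetric] 
      apply (simp only: e2)
      apply (simp only: e1)
      apply (simp add: yn yp algebra_simps cL0 cL1 cL2 cR0 cR1 cR2 cLz cRz)
      done
  qed
  then show ?thesis using t0 by simp
qed

end


context tl begin

lemma invL: fixes x z :: 'a assumes "x \<noteq> 0" shows "inverse x * (x * z) = z"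
proof -
  have "inverse x * (x * z) = (inverse x * x) * z" by (rule mult.assoc[symmetric])
  then show ?thesis using left_inverse[OF assms] by simp
qed
lemma invR: fixes x z :: 'a assumes "x \<noteq> 0" shows "x * (inverse x * z) = z"
proof -
  have "x * (inverse x * z) = (x * inverse x) * z" by (rule mult.assoc[symmetric])
  then show ?thesis using right_inverse[OF assms] by simp
qed

lemma mainB:
  assumes inv: "\<forall>k\<le>n+1. mat_invertible k (moment_matrix m k)"
    and tau: "\<forall>k\<le>n+1. taun m k \<noteq> 0"
    and H: "\<forall>k\<le>n+1. Hn m k \<noteq> 0"
  shows "D (bn m n) = \<alpha>0 * bn m n
           + \<alpha>1 * (bn m n * an m n - an m (n + 1) * bn m n)
           + \<alpha>2 * (inverse (bn m (n + 1)) * an m (n + 1) - an m n * inverse (bn m (n - 1)))"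
proof -
  define y where "y j = \<alpha>0 * of_nat j + \<alpha>1 * (bn m j - an m j) + \<alpha>2 * inverse (bn m j)" for j
  have hyp: "\<forall>k\<le>j+1. mat_invertible k (moment_matrix m k)" "\<forall>k\<le>j+1. taun m k \<noteq> 0" "\<forall>k\<le>j+1. Hn m k \<noteq> 0"
    if "j \<le> n" for j using inv tau H that by auto
  have Ft: "D (taun m j) = \<alpha>0 * taun m j + \<alpha>1 * taun m (Suc j) + y j * taun m j" if "j \<le> n" for j
    using F_facts(1)[OF hyp[OF that]] unfolding y_def by (simp add: algebra_simps eq_diff_eq)
  have Fh: "D (Hn m j) = y j * Hn m j - \<alpha>0 * of_nat j * Hn m j - \<alpha>2 * (inverse (bn m j) * Hn m (Suc j))" if "j \<le> n" for j
    using F_facts(2)[OF hyp[OF that]] unfolding y_def by (simp add: algebra_simps eq_diff_eq)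
  have bnz: "bn m j \<noteq> 0" if "j \<le> n" for j by (rule bn_nz) (use hyp[OF that] in auto)
  have Hn: "Hn m n \<noteq> 0" "Hn m (Suc n) \<noteq> 0" using H by auto
  have tn: "taun m n \<noteq> 0" "taun m (Suc n) \<noteq> 0" using tau by auto
  have b'nz: "bn m (Suc n) \<noteq> 0" using Hn tn by (simp add: bn_def an_def)
  have bH': "bn m (Suc n) * Hn m (Suc n) = an m (Suc n) * Hn m n"
    using Hn by (simp add: bn_def mult.assoc)
  have eH': "Hn m (Suc n) = inverse (bn m (Suc n)) * (an m (Suc n) * Hn m n)"
    using invL[OF b'nz, of "Hn m (Suc n)"] unfolding bH' by simp
  have at': "an m (Suc n) * taun m n = - taun m (Suc n)" using tn by (simp add: an_def mult.assoc)
  have goal: "D (bn m n) * Hn m n = (\<alpha>0 * bn m n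
           + \<alpha>1 * (bn m n * an m n - an m (n + 1) * bn m n)
           + \<alpha>2 * (inverse (bn m (n + 1)) * an m (n + 1) - an m n * inverse (bn m (n - 1)))) * Hn m n"
  proof (cases n)
    case 0
    have b0: "bn m 0 \<noteq> 0" using bnz by simp
    have m0: "m 0 \<noteq> 0" using H H0[of m] by auto
    have bt: "bn m 0 * Hn m 0 = taun m 0" using m0 by (simp add: bn_def H0 tau0 mult.assoc)
    have Db: "D (bn m 0) * Hn m 0 = D (taun m 0) - bn m 0 * D (Hn m 0)"
      using arg_cong[OF bt, of D] unfolding D_mult by (simp add: eq_diff_eq)
    have Ft0: "D (taun m 0) = \<alpha>0 * taun m 0 + \<alpha>1 * taun m (Suc 0) + y 0 * taun m 0" by (rule Ft) simp
    have Fh0: "D (Hn m 0) = y 0 * Hn m 0 - \<alpha>2 * (inverse (bn m 0) * Hn m (Suc 0))" using Fh[of 0] by simp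
    have y0: "y 0 = \<alpha>1 * bn m 0 + \<alpha>2 * inverse (bn m 0)" unfolding y_def by simp
    have e1: "taun m (Suc 0) = - (an m (Suc 0) * (bn m 0 * Hn m 0))" using at' 0 bt by simp
    have e2: "Hn m (Suc 0) = inverse (bn m (Suc 0)) * (an m (Suc 0) * Hn m 0)" using eH' 0 by simp
    show ?thesis
      unfolding 0 Db Ft0 Fh0
      apply (simp only: e1 e2 bt[symmetric])
      apply (simp add: y0 algebra_simps cL0 cL1 cL2 cR0 cR1 cR2 invL invR b0)
      done
  next
    case (Suc p)
    define \<zeta> where "\<zeta> = \<alpha>0 * of_nat p"
    have cLz: "x * (\<zeta> * z) = \<zeta> * (x * z)" for x z unfolding \<zeta>_def by (metis cL0 natL mult.assoc)
    have cRz: "x * \<zeta> = \<zeta> * x" for x unfolding \<zeta>_def by (metis cR0 natR mult.assoc)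
    have yn: "y n = \<zeta> + \<alpha>0 + \<alpha>1 * (bn m n - an m n) + \<alpha>2 * inverse (bn m n)"
      unfolding y_def \<zeta>_def using Suc by (simp add: algebra_simps)
    have yp: "y p = \<zeta> + \<alpha>1 * (bn m p - an m p) + \<alpha>2 * inverse (bn m p)"
      unfolding y_def \<zeta>_def by simp
    have Fhp: "D (Hn m p) = y p * Hn m p - \<zeta> * Hn m p - \<alpha>2 * (inverse (bn m p) * Hn m n)"
      using Fh[of p] Suc unfolding \<zeta>_def by simp
    have Fhn: "D (Hn m n) = y n * Hn m n - (\<zeta> + \<alpha>0) * Hn m n - \<alpha>2 * (inverse (bn m n) * Hn m (Suc n))"
      using Fh[of n] Suc unfolding \<zeta>_def by (simp add: algebra_simps)
    have bH: "bn m n * Hn m n = an m n * Hn m p" using Hn Suc by (simp add: bn_def mult.assoc)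
    have Db: "D (bn m n) * Hn m n = D (an m n) * Hn m p + an m n * D (Hn m p) - bn m n * D (Hn m n)"
      using arg_cong[OF bH, of D] unfolding D_mult by (simp add: eq_diff_eq)
    have DA: "D (an m n) = \<alpha>0 * an m n
           + \<alpha>1 * (- (an m (n + 1) * an m n) + an m n * an m p + bn m n * an m n - an m n * bn m p)
           + \<alpha>2 * (inverse (bn m n) * an m n - an m n * inverse (bn m p))"
      using main[OF inv tau H] Suc by simp
    have bn0: "bn m n \<noteq> 0" "bn m p \<noteq> 0" using bnz Suc by auto
    have np: "n - 1 = p" using Suc by simp
    have aH: "an m n * Hn m p = bn m n * Hn m n" using bH by simp
    show ?thesis
      unfolding Db DA Fhp Fhn np Suc_eq_plus1[symmetric]
      apply (simp only: eH')
      apply (simp add: yn yp algebra_simps cL0 cL1 cL2 cR0 cR1 cR2 cLz cRz invL invR bn0 aH)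
      done
  qed
  have "Hn m n \<noteq> 0" using H by auto
  with goal show ?thesis by simp
qed

end


theorem theorem3p3:
  fixes D :: "'a::division_ring \<Rightarrow> 'a"
    and m :: "int \<Rightarrow> 'a"
    and \<alpha>0 \<alpha>1 \<alpha>2 :: 'a
    and n :: nat
  assumes der: "derivation D"
    and const: "D \<alpha>0 = 0" "D \<alpha>1 = 0" "D \<alpha>2 = 0"
    and central: "\<forall>x. \<alpha>0 * x = x * \<alpha>0" "\<forall>x. \<alpha>1 * x = x * \<alpha>1" "\<forall>x. \<alpha>2 * x = x * \<alpha>2"
    and \<alpha>0_nz: "\<alpha>0 \<noteq> 0"
    and mom: "\<forall>j::int. D (m j) = \<alpha>0 * of_int j * m j + \<alpha>1 * m (j + 1) + \<alpha>2 * m (j - 1)"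
    and inv_Lam: "\<forall>k\<le>n + 1. mat_invertible k (moment_matrix m k)"
    and inv_tau: "\<forall>k\<le>n + 1. taun m k \<noteq> 0"
    and inv_H: "\<forall>k\<le>n + 1. Hn m k \<noteq> 0"
  shows "D (an m n) = \<alpha>0 * an m n
           + \<alpha>1 * (- (an m (n + 1) * an m n) + an m n * an m (n - 1) + bn m n * an m n - an m n * bn m (n - 1))
           + \<alpha>2 * (inverse (bn m n) * an m n - an m n * inverse (bn m (n - 1)))
       \<and> D (bn m n) = \<alpha>0 * bn m n
           + \<alpha>1 * (bn m n * an m n - an m (n + 1) * bn m n)
           + \<alpha>2 * (inverse (bn m (n + 1)) * an m (n + 1) - an m n * inverse (bn m (n - 1)))"
  proof -
  interpret tl D m \<alpha>0 \<alpha>1 \<alpha>2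
    by unfold_locales (use der central mom in auto)
  show ?thesis
    using main[OF inv_Lam inv_tau inv_H] mainB[OF inv_Lam inv_tau inv_H] by blast
qed

end
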